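(* Let $I$ be a finite set, $n\in\{1,\dots,|I|\}$, and $\bar J_n$ a set of $n$-element subsets of $I$. Samples are bit strings $o=(o_i)_{i\in I}\in\{0,1\}^I$; a set $j\in\bar J_n$ is activated by $o$ if $o_i=1$ for all $i\in j$. For $F\subset\bar J_n$ let $\mathbb 1_F:\{0,1\}^I\to\{0,1\}$ be given by $\mathbb 1_F(o)=1$ iff some $j\in F$ is activated by $o$, and let $\mathcal H:=\{\mathbb 1_F: F\subset\bar J_n\}$. Then the Vapnik–Chervonenkis dimension of $\mathcal H$ is $\operatorname{VCdim}(\mathcal H)=|\bar J_n|$.
   Context: The VC-dimension of a class of $\{0,1\}$-valued functions is the largest cardinality of a set of points on which the class realizes all possible labelings (that it shatters). *)

theory Defs
  imports Main
begin

definition shatters :: "('x \<Rightarrow> bool) set \<Rightarrow> 'x set \<Rightarrow> bool" where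
  "shatters H S \<longleftrightarrow> (\<forall>T \<subseteq> S. \<exists>h \<in> H. \<forall>x \<in> S. h x \<longleftrightarrow> x \<in> T)"

text \<open>VC dimension: largest cardinality of a finite subset of the domain X
shattered by H (the domain considered below is finite, so the maximum exists).\<close>
definition VCdim :: "'x set \<Rightarrow> ('x \<Rightarrow> bool) set \<Rightarrow> nat" where
  "VCdim X H = Max {card S | S. S \<subseteq> X \<and> finite S \<and> shatters H S}"

text \<open>Samples: bit strings indexed by I, i.e. functions I -> bool, made
extensional (value False outside I).\<close>
definition samples :: "'a set \<Rightarrow> ('a \<Rightarrow> bool) set" where
  "samples I = {s. \<forall>i. i \<notin> I \<longrightarrow> \<not> s i}"

definition activated :: "('a \<Rightarrow> bool) \<Rightarrow> 'a set \<Rightarrow> bool" where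
  "activated s j \<longleftrightarrow> (\<forall>i \<in> j. s i)"

definition indic :: "'a set set \<Rightarrow> ('a \<Rightarrow> bool) \<Rightarrow> bool" where
  "indic F s \<longleftrightarrow> (\<exists>j \<in> F. activated s j)"

definition hclass :: "'a set set \<Rightarrow> (('a \<Rightarrow> bool) \<Rightarrow> bool) set" where
  "hclass J = {indic F | F. F \<subseteq> J}"

end

theory Submission
  imports Defs
begin

theorem proposition14:
  fixes I :: "'a set" and n :: nat and J :: "'a set set"
  assumes "finite I"
    and "1 \<le> n" and "n \<le> card I"
    and "\<forall>j \<in> J. j \<subseteq> I \<and> card j = n"
  shows "VCdim (samples I) (hclass J) = card J"
proof -
  have JP: "J \<subseteq> Pow I" using assms(4) by blast
  hence finJ: "finite J" using finite_subset[OF JP] assms(1) by simp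
  have finj: "\<And>j. j \<in> J \<Longrightarrow> finite j" using assms(1,4) finite_subset by metis
  have Heq: "hclass J = indic ` Pow J" unfolding hclass_def by auto
  have finH: "finite (hclass J)" using Heq finJ by simp
  have cardH: "card (hclass J) \<le> 2 ^ card J"
    using Heq card_image_le[of "Pow J" indic] finJ by (simp add: card_Pow)
  have upper: "card S \<le> card J" if S: "finite S" "shatters (hclass J) S" for S :: "('a \<Rightarrow> bool) set"
  proof -
    define g where "g T = (SOME h. h \<in> hclass J \<and> (\<forall>x \<in> S. h x \<longleftrightarrow> x \<in> T))" for T
    have g: "g T \<in> hclass J \<and> (\<forall>x \<in> S. g T x \<longleftrightarrow> x \<in> T)" if T: "T \<in> Pow S" for T
    proof -
      have "\<exists>h. h \<in> hclass J \<and> (\<forall>x \<in> S. h x \<longleftrightarrow> x \<in> T)"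
      proof -
        have A: "\<forall>T'\<subseteq>S. \<exists>h. h \<in> hclass J \<and> (\<forall>x \<in> S. h x \<longleftrightarrow> x \<in> T')"
          using S(2) unfolding shatters_def Bex_def .
        have T': "T \<subseteq> S" using T by simp
        show ?thesis using A[rule_format, OF T'] .
      qed
      thus ?thesis unfolding g_def by (rule someI_ex)
    qed
    have inj: "inj_on g (Pow S)"
    proof (rule inj_onI)
      fix A B assume A: "A \<in> Pow S" and B: "B \<in> Pow S" and e: "g A = g B"
      have "\<forall>x \<in> S. x \<in> A \<longleftrightarrow> x \<in> B" using g[OF A] g[OF B] e by metis
      thus "A = B" using A B by blast
    qed
    have "g ` Pow S \<subseteq> hclass J" using g by blast
    hence "card (Pow S) \<le> card (hclass J)"
      using card_inj_on_le[OF inj _ finH] by blast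
    moreover have "card (Pow S) = 2 ^ card S" using S(1) by (simp add: card_Pow)
    ultimately have "(2::nat) ^ card S \<le> 2 ^ card J" using cardH by linarith
    thus ?thesis by simp
  qed
  define chi where "chi j = (\<lambda>i. i \<in> j)" for j :: "'a set"
  define S where "S = chi ` J"
  have injchi: "inj_on chi J"
    by (rule inj_onI) (simp add: chi_def fun_eq_iff set_eq_iff)
  have cardS: "card S = card J" unfolding S_def using card_image[OF injchi] .
  have act: "activated (chi j) j' \<longleftrightarrow> j' = j" if "j \<in> J" "j' \<in> J" for j j'
  proof
    assume "activated (chi j) j'"
    hence "j' \<subseteq> j" unfolding activated_def chi_def by blast
    moreover have "card j' = card j" using assms(4) that by auto
    ultimately show "j' = j" using finj[OF that(1)] card_subset_eq by blast
  next
    assume "j' = j" thus "activated (chi j) j'" unfolding activated_def chi_def by simp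
  qed
  have shat: "shatters (hclass J) S"
    unfolding shatters_def
  proof (intro allI impI)
    fix T assume T: "T \<subseteq> S"
    define F where "F = {j \<in> J. chi j \<in> T}"
    have "indic F \<in> hclass J" unfolding hclass_def F_def by blast
    moreover have "\<forall>x \<in> S. indic F x \<longleftrightarrow> x \<in> T"
    proof
      fix x assume "x \<in> S"
      then obtain j where j: "j \<in> J" "x = chi j" unfolding S_def by blast
      have "indic F x \<longleftrightarrow> (\<exists>j' \<in> F. j' = j)"
        unfolding indic_def j(2) using act[OF j(1)] F_def by auto
      also have "\<dots> \<longleftrightarrow> x \<in> T" using j F_def by auto
      finally show "indic F x \<longleftrightarrow> x \<in> T" .
    qed
    ultimately show "\<exists>h\<in>hclass J. \<forall>x\<in>S. h x = (x \<in> T)" by blast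
  qed
  have Ssub: "S \<subseteq> samples I" unfolding S_def samples_def chi_def using JP by auto
  have finS: "finite S" unfolding S_def using finJ by simp
  let ?M = "{card S | S. S \<subseteq> samples I \<and> finite S \<and> shatters (hclass J) S}"
  have Msub: "?M \<subseteq> {..card J}" using upper by auto
  hence finM: "finite ?M" using finite_subset by blast
  have "card J = card S \<and> S \<subseteq> samples I \<and> finite S \<and> shatters (hclass J) S"
    using Ssub finS shat cardS by simp
  hence inM: "card J \<in> ?M" unfolding mem_Collect_eq by (rule exI)
  show ?thesis unfolding VCdim_def
  proof (rule Max_eqI[OF finM])
    fix y assume "y \<in> ?M"
    thus "y \<le> card J" using Msub by auto
  next
    show "card J \<in> ?M" by (rule inM)
  qed
qed

end
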